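(* Let $G$ be a finite simple connected graph and let $S\subseteq V(G)$ with $|S|=k\geq 2$. Then $\kappa_k^*(G)\leq \kappa_k^*(G[S])+(|V(G)|-k)$.
   Context: $G[S]$ is the subgraph of $G$ induced by $S$. For $S\subseteq V(H)$ with $|S|\ge 2$, an $S$-Steiner tree of a graph $H$ is a subtree $T$ of $H$ with $S\subseteq V(T)$ all of whose leaves belong to $S$. A family of $S$-Steiner trees $T_1,\dots,T_k$ is completely independent if for all $1\le p<q\le k$: $E(T_p)\cap E(T_q)=\emptyset$, $V(T_p)\cap V(T_q)=S$, and for any two vertices $x_1,x_2\in S$ the $(x_1,x_2)$-paths in $T_p$ and in $T_q$ are internally disjoint. $\kappa^*_H(S)$ is the maximum number of trees in a completely independent family of $S$-Steiner trees in $H$, and $\kappa_k^*(H)=\min\{\kappa^*_H(S): S\subseteq V(H),\ |S|=k\}$. *)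

theory Defs
  imports Main
begin

definition simple_graph :: "'a set \<Rightarrow> 'a set set \<Rightarrow> bool" where
  "simple_graph V E \<longleftrightarrow> finite V \<and>
     (\<forall>e\<in>E. \<exists>u v. u \<noteq> v \<and> e = {u, v} \<and> u \<in> V \<and> v \<in> V)"

definition is_walk :: "'a set set \<Rightarrow> 'a list \<Rightarrow> bool" where
  "is_walk E p \<longleftrightarrow> p \<noteq> [] \<and> (\<forall>i. Suc i < length p \<longrightarrow> {p ! i, p ! Suc i} \<in> E)"

definition is_path :: "'a set set \<Rightarrow> 'a \<Rightarrow> 'a \<Rightarrow> 'a list \<Rightarrow> bool" where
  "is_path E x y p \<longleftrightarrow> is_walk E p \<and> distinct p \<and> hd p = x \<and> last p = y"

definition graph_connected :: "'a set \<Rightarrow> 'a set set \<Rightarrow> bool" where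
  "graph_connected V E \<longleftrightarrow>
     (\<forall>u\<in>V. \<forall>v\<in>V. \<exists>p. is_walk E p \<and> set p \<subseteq> V \<and> hd p = u \<and> last p = v)"

definition is_cycle :: "'a set set \<Rightarrow> 'a list \<Rightarrow> bool" where
  "is_cycle E p \<longleftrightarrow> length p \<ge> 3 \<and> distinct p \<and> is_walk E p \<and> {last p, hd p} \<in> E"

definition is_tree :: "'a set \<Rightarrow> 'a set set \<Rightarrow> bool" where
  "is_tree V E \<longleftrightarrow> simple_graph V E \<and> V \<noteq> {} \<and> graph_connected V E \<and>
     (\<nexists>p. is_cycle E p)"

definition induced_edges :: "'a set set \<Rightarrow> 'a set \<Rightarrow> 'a set set" where
  "induced_edges E S = {e \<in> E. e \<subseteq> S}"

definition degree :: "'a set set \<Rightarrow> 'a \<Rightarrow> nat" where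
  "degree E v = card {e \<in> E. v \<in> e}"

definition steiner_tree :: "'a set \<Rightarrow> 'a set set \<Rightarrow> 'a set \<Rightarrow> 'a set \<Rightarrow> 'a set set \<Rightarrow> bool" where
  "steiner_tree V E S VT ET \<longleftrightarrow> VT \<subseteq> V \<and> ET \<subseteq> E \<and> is_tree VT ET \<and> S \<subseteq> VT \<and>
     (\<forall>v\<in>VT. degree ET v = 1 \<longrightarrow> v \<in> S)"

definition internal_vertices :: "'a list \<Rightarrow> 'a set" where
  "internal_vertices p = set (butlast (tl p))"

definition compl_indep_family ::
  "'a set \<Rightarrow> 'a set set \<Rightarrow> 'a set \<Rightarrow> nat \<Rightarrow> (nat \<Rightarrow> 'a set \<times> 'a set set) \<Rightarrow> bool" where
  "compl_indep_family V E S k T \<longleftrightarrow>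
     (\<forall>i<k. steiner_tree V E S (fst (T i)) (snd (T i))) \<and>
     (\<forall>p q. p < q \<and> q < k \<longrightarrow>
        snd (T p) \<inter> snd (T q) = {} \<and>
        fst (T p) \<inter> fst (T q) = S \<and>
        (\<forall>x1\<in>S. \<forall>x2\<in>S. \<forall>P Q. is_path (snd (T p)) x1 x2 P \<longrightarrow> is_path (snd (T q)) x1 x2 Q \<longrightarrow>
            internal_vertices P \<inter> internal_vertices Q = {}))"

definition kappa_star_set :: "'a set \<Rightarrow> 'a set set \<Rightarrow> 'a set \<Rightarrow> nat" where
  "kappa_star_set V E S = Max {k. \<exists>T. compl_indep_family V E S k T}"

definition kappa_star :: "nat \<Rightarrow> 'a set \<Rightarrow> 'a set set \<Rightarrow> nat" where
  "kappa_star k V E = Min {kappa_star_set V E S | S. S \<subseteq> V \<and> card S = k}"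

end

theory Submission
  imports Defs
begin

lemma tree_has_edge:
  assumes "is_tree VT ET" "u \<in> VT" "v \<in> VT" "u \<noteq> v"
  shows "ET \<noteq> {}"
proof -
  from assms(1) have "graph_connected VT ET" by (simp add: is_tree_def)
  then obtain p where p: "is_walk ET p" "hd p = u" "last p = v"
    using assms(2,3) unfolding graph_connected_def by blast
  have ne: "p \<noteq> []" using p(1) by (simp add: is_walk_def)
  have "length p \<noteq> 1"
  proof
    assume "length p = 1"
    then obtain a where "p = [a]" by (cases p) auto
    then show False using p assms(4) by simp
  qed
  with ne have "Suc 0 < length p" by (cases p) auto
  then have "{p ! 0, p ! Suc 0} \<in> ET" using p(1) by (simp add: is_walk_def)
  then show ?thesis by blast
qed

lemma finite_A:
  assumes "finite S" "card S \<ge> 2"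
  shows "finite {j. \<exists>T. compl_indep_family S (induced_edges E S) S j T}"
proof -
  obtain u v where uv: "u \<in> S" "v \<in> S" "u \<noteq> v"
  proof -
    have "S \<noteq> {}" using assms by auto
    then obtain u where u: "u \<in> S" by blast
    have "card (S - {u}) \<ge> 1" using assms u by simp
    then have "S - {u} \<noteq> {}" by (metis card.empty not_one_le_zero)
    then obtain v where "v \<in> S - {u}" by blast
    then show ?thesis using that u by blast
  qed
  have fin: "finite (induced_edges E S)"
  proof -
    have "induced_edges E S \<subseteq> Pow S" by (auto simp: induced_edges_def)
    then show ?thesis using assms(1) finite_subset by blast
  qed
  have "j \<le> card (induced_edges E S)" if "compl_indep_family S (induced_edges E S) S j T" for j T
  proof -
    have st: "\<And>i. i < j \<Longrightarrow> steiner_tree S (induced_edges E S) S (fst (T i)) (snd (T i))"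
      using that by (simp add: compl_indep_family_def)
    have ne: "\<And>i. i < j \<Longrightarrow> snd (T i) \<noteq> {}"
    proof -
      fix i assume "i < j"
      then have s: "steiner_tree S (induced_edges E S) S (fst (T i)) (snd (T i))" by (rule st)
      show "snd (T i) \<noteq> {}"
        apply (rule tree_has_edge[of "fst (T i)" _ u v])
        using s uv by (auto simp: steiner_tree_def)
    qed
    define f where "f i = (SOME e. e \<in> snd (T i))" for i
    have fi: "\<And>i. i < j \<Longrightarrow> f i \<in> snd (T i)"
      unfolding f_def using ne by (meson ex_in_conv someI_ex)
    have sub: "f ` {..<j} \<subseteq> induced_edges E S"
      using fi st unfolding steiner_tree_def by blast
    have "inj_on f {..<j}"
    proof (rule inj_onI)
      fix a b assume a: "a \<in> {..<j}" and b: "b \<in> {..<j}" and eq: "f a = f b"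
      show "a = b"
      proof (rule ccontr)
        assume "a \<noteq> b"
        then have "a < b \<or> b < a" by arith
        then show False
        proof
          assume "a < b"
          then have "snd (T a) \<inter> snd (T b) = {}" using that b by (simp add: compl_indep_family_def)
          then show False using fi a b eq by fastforce
        next
          assume "b < a"
          then have "snd (T b) \<inter> snd (T a) = {}" using that a by (simp add: compl_indep_family_def)
          then show False using fi a b eq by fastforce
        qed
      qed
    qed
    then have "card (f ` {..<j}) = j" by (simp add: card_image)
    moreover have "card (f ` {..<j}) \<le> card (induced_edges E S)" using card_mono[OF fin sub] .
    ultimately show ?thesis by simp
  qed
  then have "{j. \<exists>T. compl_indep_family S (induced_edges E S) S j T} \<subseteq> {..card (induced_edges E S)}"
    by blast
  then show ?thesis using finite_subset by blast
qed

lemma family_bound: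
  assumes fV: "finite V" and SV: "S \<subseteq> V" and cS: "card S \<ge> 2"
    and T: "compl_indep_family V E S m T"
  shows "m \<le> Max {j. \<exists>T. compl_indep_family S (induced_edges E S) S j T} + (card V - card S)"
proof -
  let ?A = "{j. \<exists>T. compl_indep_family S (induced_edges E S) S j T}"
  have fS: "finite S" using fV SV finite_subset by blast
  have finA: "finite ?A" using finite_A[OF fS cS] .
  define I where "I = {i. i < m \<and> fst (T i) = S}"
  define J where "J = {i. i < m \<and> fst (T i) \<noteq> S}"
  have st0: "\<forall>i<m. steiner_tree V E S (fst (T i)) (snd (T i))"
    using T unfolding compl_indep_family_def by (rule conjunct1)
  have st: "steiner_tree V E S (fst (T i)) (snd (T i))" if "i < m" for i
    using st0 that by blast
  have pw0: "\<forall>p q. p < q \<and> q < m \<longrightarrow> snd (T p) \<inter> snd (T q) = {} \<and>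
        fst (T p) \<inter> fst (T q) = S \<and>
        (\<forall>x1\<in>S. \<forall>x2\<in>S. \<forall>P Q. is_path (snd (T p)) x1 x2 P \<longrightarrow> is_path (snd (T q)) x1 x2 Q \<longrightarrow>
            internal_vertices P \<inter> internal_vertices Q = {})"
    using T unfolding compl_indep_family_def by (rule conjunct2)
  have pw: "snd (T p) \<inter> snd (T q) = {} \<and>
        fst (T p) \<inter> fst (T q) = S \<and>
        (\<forall>x1\<in>S. \<forall>x2\<in>S. \<forall>P Q. is_path (snd (T p)) x1 x2 P \<longrightarrow> is_path (snd (T q)) x1 x2 Q \<longrightarrow>
            internal_vertices P \<inter> internal_vertices Q = {})" if "p < q" "q < m" for p q
    using pw0[rule_format, OF conjI[OF that]] .
  have finI: "finite I" unfolding I_def by simp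
  have finJ: "finite J" unfolding J_def by simp
  have mIJ: "m = card I + card J"
  proof -
    have "{..<m} = I \<union> J" "I \<inter> J = {}" unfolding I_def J_def by auto
    then show ?thesis using card_Un_disjoint[OF finI finJ] by (metis card_lessThan)
  qed
  define l where "l = sorted_list_of_set I"
  have len: "length l = card I" unfolding l_def by simp
  have setl: "set l = I" unfolding l_def using finI by simp
  have sw: "sorted_wrt (<) l" unfolding l_def by simp
  define T' where "T' j = T (l ! j)" for j
  have lin: "l ! j \<in> I" if "j < card I" for j
  proof -
    have "l ! j \<in> set l" using that len by simp
    then show ?thesis using setl by simp
  qed
  have "compl_indep_family S (induced_edges E S) S (card I) T'"
    unfolding compl_indep_family_def
  proof (intro conjI allI impI)
    fix i assume i: "i < card I"
    then have li: "l ! i < m" "fst (T (l ! i)) = S" using lin[OF i] by (auto simp: I_def)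
    have s: "steiner_tree V E S (fst (T (l ! i))) (snd (T (l ! i)))" using st[OF li(1)] .
    have "snd (T (l ! i)) \<subseteq> induced_edges E S"
    proof
      fix e assume e: "e \<in> snd (T (l ! i))"
      have "e \<in> E" using s e unfolding steiner_tree_def by blast
      have "simple_graph (fst (T (l ! i))) (snd (T (l ! i)))"
        using s unfolding steiner_tree_def is_tree_def by blast
      then obtain u v where "e = {u, v}" "u \<in> fst (T (l ! i))" "v \<in> fst (T (l ! i))"
        using e unfolding simple_graph_def by blast
      then have "e \<subseteq> S" using li(2) by simp
      with \<open>e \<in> E\<close> have "e \<in> E" "e \<subseteq> S" by auto
      then show "e \<in> induced_edges E S" by (simp add: induced_edges_def)
    qed
    then show "steiner_tree S (induced_edges E S) S (fst (T' i)) (snd (T' i))"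
      using s li(2) unfolding T'_def steiner_tree_def by simp
  next
    fix p q assume pq: "p < q \<and> q < card I"
    have lt: "l ! p < l ! q" using sw pq len by (simp add: sorted_wrt_iff_nth_less)
    have qm: "l ! q < m" using lin[of q] pq by (simp add: I_def)
    note P = pw[OF lt qm]
    show "snd (T' p) \<inter> snd (T' q) = {}" using P by (simp add: T'_def)
    show "fst (T' p) \<inter> fst (T' q) = S" using P by (simp add: T'_def)
    show "\<forall>x1\<in>S. \<forall>x2\<in>S. \<forall>P Q. is_path (snd (T' p)) x1 x2 P \<longrightarrow> is_path (snd (T' q)) x1 x2 Q \<longrightarrow>
            internal_vertices P \<inter> internal_vertices Q = {}" using P by (simp add: T'_def)
  qed
  then have "card I \<in> ?A" by blast
  then have cI: "card I \<le> Max ?A" using finA by (simp add: Max_ge)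
  have ex: "\<And>i. i \<in> J \<Longrightarrow> \<exists>x. x \<in> fst (T i) - S"
  proof -
    fix i assume "i \<in> J"
    then have "i < m" "fst (T i) \<noteq> S" by (auto simp: J_def)
    moreover have "S \<subseteq> fst (T i)" using st[OF \<open>i < m\<close>] by (simp add: steiner_tree_def)
    ultimately show "\<exists>x. x \<in> fst (T i) - S" by blast
  qed
  define f where "f i = (SOME x. x \<in> fst (T i) - S)" for i
  have fi: "f i \<in> fst (T i) - S" if "i \<in> J" for i
    unfolding f_def using someI_ex[OF ex[OF that]] .
  have sub: "f ` J \<subseteq> V - S"
  proof
    fix x assume "x \<in> f ` J"
    then obtain i where i: "i \<in> J" "x = f i" by blast
    then have "i < m" by (simp add: J_def)
    then have "fst (T i) \<subseteq> V" using st[of i] unfolding steiner_tree_def by blast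
    then show "x \<in> V - S" using fi[OF i(1)] i(2) by blast
  qed
  have "inj_on f J"
  proof (rule inj_onI)
    fix a b assume a: "a \<in> J" and b: "b \<in> J" and eq: "f a = f b"
    show "a = b"
    proof (rule ccontr)
      assume "a \<noteq> b"
      then have "a < b \<or> b < a" by arith
      then show False
      proof
        assume xy: "a < b"
        have "b < m" using b by (simp add: J_def)
        then have I: "fst (T a) \<inter> fst (T b) = S" by (rule conjunct1[OF conjunct2[OF pw[OF xy]]])
        have "f a \<in> fst (T a) - S" by (rule fi[OF a])
        moreover have "f b \<in> fst (T b) - S" by (rule fi[OF b])
        ultimately have "f a \<in> fst (T a) \<inter> fst (T b)" "f a \<notin> S" using eq by auto
        then show False using I by simp
      next
        assume xy: "b < a"
        have "a < m" using a by (simp add: J_def)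
        then have I: "fst (T b) \<inter> fst (T a) = S" by (rule conjunct1[OF conjunct2[OF pw[OF xy]]])
        have "f a \<in> fst (T a) - S" by (rule fi[OF a])
        moreover have "f b \<in> fst (T b) - S" by (rule fi[OF b])
        ultimately have "f a \<in> fst (T b) \<inter> fst (T a)" "f a \<notin> S" using eq by auto
        then show False using I by simp
      qed
    qed
  qed
  then have "card J = card (f ` J)" by (simp add: card_image)
  also have "\<dots> \<le> card (V - S)" using card_mono[OF _ sub] fV by simp
  also have "\<dots> = card V - card S" using card_Diff_subset[OF fS SV] .
  finally show ?thesis using mIJ cI by simp
qed

theorem theorem2p4:
  fixes V :: "'a set" and E :: "'a set set" and S :: "'a set" and k :: nat
  assumes "simple_graph V E" and "graph_connected V E"
    and "S \<subseteq> V" and "card S = k" and "k \<ge> 2"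
  shows "kappa_star k V E \<le> kappa_star k S (induced_edges E S) + (card V - k)"
proof -
  let ?A = "{j. \<exists>T. compl_indep_family S (induced_edges E S) S j T}"
  let ?B = "{j. \<exists>T. compl_indep_family V E S j T}"
  have fV: "finite V" using assms(1) by (simp add: simple_graph_def)
  have fS: "finite S" using fV assms(3) finite_subset by blast
  have cS: "card S \<ge> 2" using assms by simp
  have bnd: "\<And>j. j \<in> ?B \<Longrightarrow> j \<le> Max ?A + (card V - card S)"
    using family_bound[OF fV assms(3) cS] by blast
  have finB: "finite ?B"
    using bnd by (meson finite_nat_set_iff_bounded_le)
  have "compl_indep_family V E S 0 T" for T unfolding compl_indep_family_def by simp
  then have "0 \<in> ?B" by blast
  then have "Max ?B \<in> ?B" using finB Max_in by blast
  then have "Max ?B \<le> Max ?A + (card V - card S)" by (rule bnd)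
  then have ks: "kappa_star_set V E S \<le> Max ?A + (card V - k)"
    unfolding kappa_star_set_def using assms(4) by simp
  have "kappa_star k V E \<le> kappa_star_set V E S"
  proof -
    have fin: "finite {kappa_star_set V E S' | S'. S' \<subseteq> V \<and> card S' = k}"
    proof -
      have "{kappa_star_set V E S' | S'. S' \<subseteq> V \<and> card S' = k} \<subseteq> (\<lambda>S'. kappa_star_set V E S') ` Pow V"
        by auto
      then show ?thesis using fV finite_subset by blast
    qed
    show ?thesis unfolding kappa_star_def
      apply (rule Min_le[OF fin]) using assms(3,4) by blast
  qed
  moreover have "kappa_star k S (induced_edges E S) = kappa_star_set S (induced_edges E S) S"
  proof -
    have "{kappa_star_set S (induced_edges E S) S' | S'. S' \<subseteq> S \<and> card S' = k}
          = {kappa_star_set S (induced_edges E S) S}"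
    proof -
      have eqS: "S' = S" if "S' \<subseteq> S" "card S' = k" for S'
        using card_subset_eq[OF fS that(1)] that(2) assms(4) by simp
      show ?thesis
      proof
        show "{kappa_star_set S (induced_edges E S) S' | S'. S' \<subseteq> S \<and> card S' = k}
          \<subseteq> {kappa_star_set S (induced_edges E S) S}" using eqS by blast
        show "{kappa_star_set S (induced_edges E S) S}
          \<subseteq> {kappa_star_set S (induced_edges E S) S' | S'. S' \<subseteq> S \<and> card S' = k}"
          using assms(4) by blast
      qed
    qed
    then show ?thesis unfolding kappa_star_def by simp
  qed
  moreover have "kappa_star_set S (induced_edges E S) S = Max ?A" by (simp add: kappa_star_set_def)
  ultimately show ?thesis using ks by simp
qed

end
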